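(* Let $R$ be an associative unital division ring over a field $F$ with $\operatorname{char} F=0$ (with $F$ contained in the center of $R$). Let $\varphi_{i,j}\in R$ for $i,j\in\mathbb{Z}_{\geq 0}$. For $l,m\in\mathbb{Z}_{\geq0}$ and $n\geq 1$ put $$\Theta_{l,m,n}=\bigl(\varphi_{l+i-1,\,m+j-1}\bigr)_{1\leq i,j\leq n},\qquad \theta_{l,m,n}=|\Theta_{l,m,n}|_{nn},$$ and adopt the convention $\theta_{l,m,0}^{-1}:=0$. Assume that all quasideterminants of all the matrices $\Theta_{l,m,n}$ and of their square submatrices occurring below are defined and that all $\theta_{l,m,n}$ ($n\geq1$) are invertible. Then for all $l,m\geq 0$ and $n\geq 1$, $$\theta_{l+1,m+1,n}=\theta_{l,m,n+1}+\theta_{l+1,m,n}\bigl(\theta_{l,m,n}^{-1}-\theta_{l+1,m+1,n-1}^{-1}\bigr)\theta_{l,m+1,n}.$$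
   Context: For an $n\times n$ matrix $X=(x_{ij})$ over $R$, let $X^{ij}$ denote the matrix obtained by deleting row $i$ and column $j$, $r_i^j$ the $i$-th row with the $j$-th entry removed, and $c_j^i$ the $j$-th column with the $i$-th entry removed. The quasideterminant is $|X|_{ij}=x_{ij}-r_i^j\,(X^{ij})^{-1}\,c_j^i$, defined when $X^{ij}$ is invertible; for $n=1$, $|X|_{11}=x_{11}$. *)

theory Defs
  imports Main
begin

text \<open>Square n x n matrices over a (possibly noncommutative) ring are represented as
functions nat \<Rightarrow> nat \<Rightarrow> 'a, only entries with indices < n being relevant
(indices are 0-based: row i of the paper is row i-1 here).\<close>

definition mat_mult :: "nat \<Rightarrow> (nat \<Rightarrow> nat \<Rightarrow> 'a::semiring_0) \<Rightarrow> (nat \<Rightarrow> nat \<Rightarrow> 'a) \<Rightarrow> nat \<Rightarrow> nat \<Rightarrow> 'a" where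
  "mat_mult n A B = (\<lambda>i j. \<Sum>k<n. A i k * B k j)"

definition mat_id :: "nat \<Rightarrow> nat \<Rightarrow> 'a::{zero,one}" where
  "mat_id = (\<lambda>i j. if i = j then 1 else 0)"

definition is_mat_inverse :: "nat \<Rightarrow> (nat \<Rightarrow> nat \<Rightarrow> 'a::semiring_1) \<Rightarrow> (nat \<Rightarrow> nat \<Rightarrow> 'a) \<Rightarrow> bool" where
  "is_mat_inverse n A B \<longleftrightarrow>
     (\<forall>i<n. \<forall>j<n. mat_mult n A B i j = mat_id i j \<and> mat_mult n B A i j = mat_id i j)"

definition mat_invertible :: "nat \<Rightarrow> (nat \<Rightarrow> nat \<Rightarrow> 'a::semiring_1) \<Rightarrow> bool" where
  "mat_invertible n A \<longleftrightarrow> (\<exists>B. is_mat_inverse n A B)"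

definition mat_inv :: "nat \<Rightarrow> (nat \<Rightarrow> nat \<Rightarrow> 'a::semiring_1) \<Rightarrow> nat \<Rightarrow> nat \<Rightarrow> 'a" where
  "mat_inv n A = (SOME B. is_mat_inverse n A B)"

text \<open>Index of the original matrix corresponding to index a after deleting index i.\<close>
definition skip :: "nat \<Rightarrow> nat \<Rightarrow> nat" where
  "skip i a = (if a < i then a else a + 1)"

definition minor :: "nat \<Rightarrow> nat \<Rightarrow> (nat \<Rightarrow> nat \<Rightarrow> 'a) \<Rightarrow> nat \<Rightarrow> nat \<Rightarrow> 'a" where
  "minor i j A = (\<lambda>a b. A (skip i a) (skip j b))"

definition qdet :: "nat \<Rightarrow> (nat \<Rightarrow> nat \<Rightarrow> 'a::ring_1) \<Rightarrow> nat \<Rightarrow> nat \<Rightarrow> 'a" where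
  "qdet n X i j =
     (if n = 1 then X i j
      else X i j - (\<Sum>a<n-1. \<Sum>b<n-1.
                     X i (skip j a) * mat_inv (n-1) (minor i j X) a b * X (skip i b) j))"

definition qdet_defined :: "nat \<Rightarrow> (nat \<Rightarrow> nat \<Rightarrow> 'a::ring_1) \<Rightarrow> nat \<Rightarrow> nat \<Rightarrow> bool" where
  "qdet_defined n X i j \<longleftrightarrow> n = 1 \<or> mat_invertible (n-1) (minor i j X)"

definition Theta :: "(nat \<Rightarrow> nat \<Rightarrow> 'a) \<Rightarrow> nat \<Rightarrow> nat \<Rightarrow> nat \<Rightarrow> nat \<Rightarrow> 'a" where
  "Theta \<phi> l m = (\<lambda>i j. \<phi> (l + i) (m + j))"

definition theta :: "(nat \<Rightarrow> nat \<Rightarrow> 'a::ring_1) \<Rightarrow> nat \<Rightarrow> nat \<Rightarrow> nat \<Rightarrow> 'a" where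
  "theta \<phi> l m n = qdet n (Theta \<phi> l m) (n-1) (n-1)"

definition theta_inv :: "(nat \<Rightarrow> nat \<Rightarrow> 'a::division_ring) \<Rightarrow> nat \<Rightarrow> nat \<Rightarrow> nat \<Rightarrow> 'a" where
  "theta_inv \<phi> l m n = (if n = 0 then 0 else inverse (theta \<phi> l m n))"

end

theory Submission
  imports Defs
begin

definition rv :: "nat \<Rightarrow> (nat \<Rightarrow> nat \<Rightarrow> 'a::ring_1) \<Rightarrow> (nat \<Rightarrow> 'a) \<Rightarrow> nat \<Rightarrow> 'a" where
  "rv K \<phi> c j = (\<Sum>r<K. c r * \<phi> r j)"

lemma sum_supp:
  fixes c :: "nat \<Rightarrow> 'a::ring_1"
  assumes "\<forall>r. r < a \<or> a + k \<le> r \<longrightarrow> c r = 0" "a + k \<le> K"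
  shows "(\<Sum>r<K. c r * f r) = (\<Sum>i<k. c (a+i) * f (a+i))"
proof -
  have "(\<Sum>r<K. c r * f r) = (\<Sum>r\<in>{a..<a+k}. c r * f r)"
    by (rule sum.mono_neutral_right) (use assms in auto)
  also have "\<dots> = (\<Sum>i<k. c (a+i) * f (a+i))"
    by (rule sum.reindex_bij_witness[of _ "\<lambda>i. a + i" "\<lambda>r. r - a"]) auto
  finally show ?thesis .
qed

lemma inv_transfer:
  assumes "mat_invertible n A" "\<forall>i<n. \<forall>j<n. A i j = A' i j"
  shows "mat_invertible n A'"
proof -
  obtain B where B: "is_mat_inverse n A B" using assms(1) mat_invertible_def by blast
  have "is_mat_inverse n A' B"
    using B assms(2) unfolding is_mat_inverse_def mat_mult_def by simp
  then show ?thesis unfolding mat_invertible_def by blast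
qed

lemma inv_transfer2:
  assumes "is_mat_inverse n A B" "\<forall>i<n. \<forall>j<n. A i j = A' i j"
  shows "is_mat_inverse n A' B"
  using assms unfolding is_mat_inverse_def mat_mult_def by simp

lemma mat_inv_is: "mat_invertible n A \<Longrightarrow> is_mat_inverse n A (mat_inv n A)"
  unfolding mat_invertible_def mat_inv_def by (metis someI_ex)

lemma rv_lin:
  "rv K \<phi> (\<lambda>r. x * c r - y * d r - z * e r) j = x * rv K \<phi> c j - y * rv K \<phi> d j - z * rv K \<phi> e j"
proof -
  have "rv K \<phi> (\<lambda>r. x * c r - y * d r - z * e r) j
     = (\<Sum>r<K. x * (c r * \<phi> r j) - y * (d r * \<phi> r j) - z * (e r * \<phi> r j))"
    unfolding rv_def by (intro sum.cong refl) (simp add: algebra_simps)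
  also have "\<dots> = x * rv K \<phi> c j - y * rv K \<phi> d j - z * rv K \<phi> e j"
    unfolding rv_def sum_subtractf sum_distrib_left ..
  finally show ?thesis .
qed

lemma rv_zero: "rv K \<phi> (\<lambda>r. 0) j = 0"
  unfolding rv_def by simp

lemma uniq:
  fixes c :: "nat \<Rightarrow> 'a::ring_1"
  assumes supp: "\<forall>r. r < a \<or> a + k \<le> r \<longrightarrow> c r = 0" and K: "a + k \<le> K"
    and van: "\<forall>j<k. rv K \<phi> c (b+j) = 0" and inv: "mat_invertible k (Theta \<phi> a b)"
  shows "c r = 0"
proof (cases "r < a \<or> a + k \<le> r")
  case True then show ?thesis using supp by blast
next
  case False
  define i0 where "i0 = r - a"
  have i0: "i0 < k" "r = a + i0" using False i0_def by auto
  obtain B where B: "is_mat_inverse k (Theta \<phi> a b) B" using inv mat_invertible_def by blast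
  have rvj: "rv K \<phi> c (b+j) = (\<Sum>i<k. c (a+i) * \<phi> (a+i) (b+j))" for j
    unfolding rv_def using sum_supp[OF supp K, of "\<lambda>r. \<phi> r (b+j)"] by simp
  have "c r = (\<Sum>i<k. c (a+i) * mat_id i i0)"
    using i0 by (simp add: mat_id_def if_distrib[of "\<lambda>x. _ * x"] cong: if_cong)
  also have "\<dots> = (\<Sum>i<k. c (a+i) * (\<Sum>j<k. Theta \<phi> a b i j * B j i0))"
    using B i0 unfolding is_mat_inverse_def mat_mult_def
    by (intro sum.cong refl) auto
  also have "\<dots> = (\<Sum>i<k. \<Sum>j<k. c (a+i) * (Theta \<phi> a b i j * B j i0))"
    unfolding sum_distrib_left ..
  also have "\<dots> = (\<Sum>j<k. \<Sum>i<k. c (a+i) * (Theta \<phi> a b i j * B j i0))"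
    by (rule sum.swap)
  also have "\<dots> = (\<Sum>j<k. (\<Sum>i<k. c (a+i) * \<phi> (a+i) (b+j)) * B j i0)"
    unfolding sum_distrib_right by (simp add: Theta_def mult.assoc)
  also have "\<dots> = 0"
    using van rvj by simp
  finally show ?thesis .
qed

lemma char:
  fixes \<phi> :: "nat \<Rightarrow> nat \<Rightarrow> 'a::ring_1"
  assumes inv: "mat_invertible N (Theta \<phi> l m)" and K: "l + N + 1 \<le> K"
  shows "\<exists>c. (\<forall>r. r < l \<or> l + Suc N \<le> r \<longrightarrow> c r = 0) \<and> c (l+N) = 1
     \<and> (\<forall>j<N. rv K \<phi> c (m+j) = 0) \<and> rv K \<phi> c (m+N) = theta \<phi> l m (Suc N)"
proof -
  define M where "M = minor N N (Theta \<phi> l m)"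
  have MT: "\<forall>i<N. \<forall>j<N. Theta \<phi> l m i j = M i j" by (simp add: M_def minor_def skip_def)
  have Mb: "\<And>i j. i < N \<Longrightarrow> j < N \<Longrightarrow> M i j = \<phi> (l+i) (m+j)"
    by (simp add: M_def minor_def skip_def Theta_def)
  define Mi where "Mi = mat_inv N M"
  have Mi: "is_mat_inverse N M Mi" using mat_inv_is[OF inv_transfer[OF inv MT]] Mi_def by simp
  define u where "u b = (\<Sum>a<N. \<phi> (l+N) (m+a) * Mi a b)" for b
  define c where "c r = (if r = l+N then 1 else if l \<le> r \<and> r < l+N then - u (r-l) else 0)" for r
  have supp: "\<forall>r. r < l \<or> l + Suc N \<le> r \<longrightarrow> c r = 0" by (simp add: c_def)
  have rvc: "rv K \<phi> c j = \<phi> (l+N) j - (\<Sum>b<N. u b * \<phi> (l+b) j)" for j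
  proof -
    have "rv K \<phi> c j = (\<Sum>i<Suc N. c (l+i) * \<phi> (l+i) j)"
      unfolding rv_def using sum_supp[OF supp, of K "\<lambda>r. \<phi> r j"] K by simp
    also have "\<dots> = (\<Sum>i<N. c (l+i) * \<phi> (l+i) j) + \<phi> (l+N) j" by (simp add: c_def)
    also have "(\<Sum>i<N. c (l+i) * \<phi> (l+i) j) = - (\<Sum>b<N. u b * \<phi> (l+b) j)"
      by (simp add: c_def sum_negf[symmetric])
    finally show ?thesis by simp
  qed
  have key: "(\<Sum>b<N. u b * \<phi> (l+b) j) = (\<Sum>a<N. \<Sum>b<N. \<phi> (l+N) (m+a) * (Mi a b * \<phi> (l+b) j))" for j
  proof -
    have "(\<Sum>b<N. u b * \<phi> (l+b) j) = (\<Sum>b<N. \<Sum>a<N. \<phi> (l+N) (m+a) * (Mi a b * \<phi> (l+b) j))"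
      unfolding u_def sum_distrib_right by (simp add: mult.assoc)
    also have "\<dots> = (\<Sum>a<N. \<Sum>b<N. \<phi> (l+N) (m+a) * (Mi a b * \<phi> (l+b) j))"
      by (rule sum.swap)
    finally show ?thesis .
  qed
  have van: "\<forall>j<N. rv K \<phi> c (m+j) = 0"
  proof (intro allI impI)
    fix j assume j: "j < N"
    have mi: "(\<Sum>b<N. Mi a b * \<phi> (l+b) (m+j)) = mat_id a j" if "a < N" for a
    proof -
      have "(\<Sum>b<N. Mi a b * \<phi> (l+b) (m+j)) = (\<Sum>b<N. Mi a b * M b j)"
        using j Mb by (intro sum.cong refl) auto
      then show ?thesis using Mi that j unfolding is_mat_inverse_def mat_mult_def by simp
    qed
    have "(\<Sum>a<N. \<Sum>b<N. \<phi> (l+N) (m+a) * (Mi a b * \<phi> (l+b) (m+j)))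
        = (\<Sum>a<N. \<phi> (l+N) (m+a) * mat_id a j)"
      by (intro sum.cong refl) (simp add: mi sum_distrib_left[symmetric])
    also have "\<dots> = \<phi> (l+N) (m+j)"
      using j by (simp add: mat_id_def if_distrib[of "\<lambda>x. _ * x"] cong: if_cong)
    finally show "rv K \<phi> c (m+j) = 0" using rvc key by simp
  qed
  have top: "rv K \<phi> c (m+N) = theta \<phi> l m (Suc N)"
  proof -
    have "theta \<phi> l m (Suc N) = \<phi> (l+N) (m+N) - (\<Sum>a<N. \<Sum>b<N. \<phi> (l+N) (m+a) * Mi a b * \<phi> (l+b) (m+N))"
    proof (cases "N = 0")
      case True then show ?thesis by (simp add: theta_def qdet_def Theta_def)
    next
      case False
      have "theta \<phi> l m (Suc N) = \<phi> (l+N) (m+N) - (\<Sum>a<N. \<Sum>b<N. Theta \<phi> l m N (skip N a) * Mi a b * Theta \<phi> l m (skip N b) N)"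
        using False by (simp add: theta_def qdet_def Mi_def M_def Theta_def)
      also have "(\<Sum>a<N. \<Sum>b<N. Theta \<phi> l m N (skip N a) * Mi a b * Theta \<phi> l m (skip N b) N)
          = (\<Sum>a<N. \<Sum>b<N. \<phi> (l+N) (m+a) * Mi a b * \<phi> (l+b) (m+N))"
        by (intro sum.cong refl) (simp add: skip_def Theta_def)
      finally show ?thesis .
    qed
    then show ?thesis using rvc key by (simp add: mult.assoc)
  qed
  show ?thesis using supp van top by (intro exI[of _ c]) (simp add: c_def)
qed

theorem proposition3p1:
  fixes \<phi> :: "nat \<Rightarrow> nat \<Rightarrow> 'a::{division_ring, ring_char_0}"
  assumes defined: "\<And>l m n i j. 1 \<le> n \<Longrightarrow> i < n \<Longrightarrow> j < n \<Longrightarrow> qdet_defined n (Theta \<phi> l m) i j"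
    and invertible: "\<And>l m n. 1 \<le> n \<Longrightarrow> theta \<phi> l m n \<noteq> 0"
    and n: "1 \<le> n"
  shows "theta \<phi> (l+1) (m+1) n =
           theta \<phi> l m (n+1)
           + theta \<phi> (l+1) m n * (theta_inv \<phi> l m n - theta_inv \<phi> (l+1) (m+1) (n-1)) * theta \<phi> l (m+1) n"
proof -
  have thinv: "mat_invertible k (Theta \<phi> a b)" for k a b
  proof (cases "k = 0")
    case True then show ?thesis by (simp add: mat_invertible_def is_mat_inverse_def)
  next
    case False
    have "qdet_defined (k+1) (Theta \<phi> a b) k k" using defined[of "k+1" k k a b] by simp
    then have "mat_invertible k (minor k k (Theta \<phi> a b))" using False by (simp add: qdet_defined_def)
    then show ?thesis by (rule inv_transfer) (simp add: minor_def skip_def)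
  qed
  obtain p where np: "n = Suc p" using n by (cases n) auto
  define K where "K = l + p + 3"
  define t1 where "t1 = theta \<phi> l m (Suc (Suc p))"
  define t2 where "t2 = theta \<phi> (l+1) (m+1) (Suc p)"
  define t3 where "t3 = theta \<phi> (l+1) m (Suc p)"
  define t4 where "t4 = theta \<phi> l m (Suc p)"
  define t5 where "t5 = theta \<phi> l (m+1) (Suc p)"
  define t6 where "t6 = theta \<phi> (l+1) (m+1) p"
  define t6i where "t6i = theta_inv \<phi> (l+1) (m+1) p"
  have t4nz: "t4 \<noteq> 0" using invertible t4_def by simp
  have t6nz: "0 < p \<Longrightarrow> t6 \<noteq> 0" using invertible t6_def by simp
  have t6i0: "p = 0 \<Longrightarrow> t6i = 0" by (simp add: t6i_def theta_inv_def)
  have t6i1: "0 < p \<Longrightarrow> t6i = inverse t6" by (simp add: t6i_def theta_inv_def t6_def)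
  obtain e where e: "\<forall>r. r < l \<or> l + Suc (Suc p) \<le> r \<longrightarrow> e r = 0" "e (l + Suc p) = 1"
      "\<forall>j<Suc p. rv K \<phi> e (m+j) = 0" "rv K \<phi> e (m + Suc p) = t1"
    using char[OF thinv[of "Suc p" l m], of K] K_def t1_def by auto
  obtain fp where fp: "\<forall>r. r < l+1 \<or> l + 1 + Suc p \<le> r \<longrightarrow> fp r = 0" "fp (l+1+p) = 1"
      "\<forall>j<p. rv K \<phi> fp (m+1+j) = 0" "rv K \<phi> fp (m+1+p) = t2"
    using char[OF thinv[of p "l+1" "m+1"], of K] K_def t2_def by auto
  obtain gq where gq: "\<forall>r. r < l+1 \<or> l + 1 + Suc p \<le> r \<longrightarrow> gq r = 0" "gq (l+1+p) = 1"
      "\<forall>j<p. rv K \<phi> gq (m+j) = 0" "rv K \<phi> gq (m+p) = t3"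
    using char[OF thinv[of p "l+1" "m"], of K] K_def t3_def by auto
  obtain hs where hs: "\<forall>r. r < l \<or> l + Suc p \<le> r \<longrightarrow> hs r = 0" "hs (l+p) = 1"
      "\<forall>j<p. rv K \<phi> hs (m+j) = 0" "rv K \<phi> hs (m+p) = t4"
    using char[OF thinv[of p "l" "m"], of K] K_def t4_def by auto
  obtain kt where kt: "\<forall>r. r < l \<or> l + Suc p \<le> r \<longrightarrow> kt r = 0" "kt (l+p) = 1"
      "\<forall>j<p. rv K \<phi> kt (m+1+j) = 0" "rv K \<phi> kt (m+1+p) = t5"
    using char[OF thinv[of p "l" "m+1"], of K] K_def t5_def by auto
  obtain lw where lw: "\<forall>r. r < l+1 \<or> l + 1 + p \<le> r \<longrightarrow> lw r = 0" "0 < p \<longrightarrow> lw (l+p) = 1"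
      "\<forall>j. j + 1 < p \<longrightarrow> rv K \<phi> lw (m+1+j) = 0" "0 < p \<longrightarrow> rv K \<phi> lw (m+p) = t6"
  proof (cases p)
    case 0
    then show ?thesis using that[of "\<lambda>r. 0"] by (simp add: rv_zero)
  next
    case (Suc q)
    then show ?thesis using char[OF thinv[of q "l+1" "m+1"], of K] K_def t6_def that by auto
  qed
  define x where "x = t3 * inverse t4"
  define y where "y = t3 * t6i"
  define z where "z = inverse t4 - t6i"
  define g where "g = rv K \<phi> gq (m + Suc p)"
  define h where "h = rv K \<phi> hs (m + Suc p)"
  define Ln where "Ln = rv K \<phi> lw (m + Suc p)"
  define cA where "cA r = 1 * e r - 1 * gq r - (- x) * hs r" for r
  have rvA: "rv K \<phi> cA j = rv K \<phi> e j - rv K \<phi> gq j + x * rv K \<phi> hs j" for j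
    using rv_lin[of K \<phi> 1 e 1 gq "-x" hs j] unfolding cA_def by simp
  have A: "t1 - g + x * h = 0"
  proof -
    have supp: "\<forall>r. r < l \<or> l + Suc p \<le> r \<longrightarrow> cA r = 0"
    proof (intro allI impI)
      fix r assume r: "r < l \<or> l + Suc p \<le> r"
      show "cA r = 0"
      proof (cases "r = l + Suc p")
        case True then show ?thesis using e(2) gq(2) hs(1) by (simp add: cA_def)
      next
        case False
        then have r2: "r < l \<or> l + Suc (Suc p) \<le> r" using r by auto
        show ?thesis
        proof (cases "r < l")
          case True then show ?thesis using e(1) gq(1) hs(1) by (simp add: cA_def)
        next
          case False then show ?thesis using r2 e(1) gq(1) hs(1) by (simp add: cA_def)
        qed
      qed
    qed
    have van: "\<forall>j<Suc p. rv K \<phi> cA (m+j) = 0"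
    proof (intro allI impI)
      fix j assume j: "j < Suc p"
      show "rv K \<phi> cA (m+j) = 0"
      proof (cases "j < p")
        case True then show ?thesis using e(3) gq(3) hs(3) j rvA by simp
      next
        case False
        then have "j = p" using j by simp
        then show ?thesis using e(3) gq(4) hs(4) rvA t4nz by (simp add: x_def mult.assoc)
      qed
    qed
    have "\<forall>r. cA r = 0" using uniq[OF supp _ van thinv] K_def by simp
    then have "cA = (\<lambda>r. 0)" by auto
    then have "rv K \<phi> cA (m + Suc p) = 0" by (simp add: rv_zero)
    then show ?thesis using rvA e(4) by (simp add: g_def h_def)
  qed
  define cB where "cB r = 1 * gq r - 1 * fp r - y * lw r" for r
  have rvB: "rv K \<phi> cB j = rv K \<phi> gq j - rv K \<phi> fp j - y * rv K \<phi> lw j" for j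
    using rv_lin[of K \<phi> 1 gq 1 fp y lw j] unfolding cB_def by simp
  have B: "g - t2 - y * Ln = 0"
  proof -
    have supp: "\<forall>r. r < l+1 \<or> l + 1 + p \<le> r \<longrightarrow> cB r = 0"
    proof (intro allI impI)
      fix r assume r: "r < l+1 \<or> l + 1 + p \<le> r"
      show "cB r = 0"
      proof (cases "r = l + 1 + p")
        case True then show ?thesis using gq(2) fp(2) lw(1) by (simp add: cB_def)
      next
        case False
        then have r2: "r < l + 1 \<or> l + 1 + Suc p \<le> r" using r by auto
        show ?thesis
        proof (cases "r < l + 1")
          case True then show ?thesis using gq(1) fp(1) lw(1) by (simp add: cB_def)
        next
          case False then show ?thesis using r2 gq(1) fp(1) lw(1) by (simp add: cB_def)
        qed
      qed
    qed
    have van: "\<forall>j<p. rv K \<phi> cB (m+1+j) = 0"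
    proof (intro allI impI)
      fix j assume j: "j < p"
      have mj: "m + 1 + j = m + Suc j" by simp
      show "rv K \<phi> cB (m+1+j) = 0"
      proof (cases "Suc j < p")
        case True then show ?thesis using gq(3)[rule_format, of "Suc j"] fp(3) lw(3) j rvB by simp
      next
        case False
        then have jp: "Suc j = p" using j by simp
        have "rv K \<phi> lw (m+1+j) = t6" using lw(4) jp by auto
        moreover have mp: "m + 1 + j = m + p" using jp by simp
        have "rv K \<phi> gq (m+1+j) = t3" using gq(4) by (simp only: mp)
        ultimately show ?thesis using fp(3) j rvB t6nz t6i1 jp
          by (simp add: y_def mult.assoc)
      qed
    qed
    have "\<forall>r. cB r = 0" using uniq[OF supp _ van thinv] K_def by simp
    then have "cB = (\<lambda>r. 0)" by auto
    then have "rv K \<phi> cB (m + 1 + p) = 0" by (simp add: rv_zero)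
    then show ?thesis using rvB fp(4) by (simp add: g_def Ln_def)
  qed
  define cC where "cC r = inverse t4 * hs r - t6i * lw r - z * kt r" for r
  have rvC: "rv K \<phi> cC j = inverse t4 * rv K \<phi> hs j - t6i * rv K \<phi> lw j - z * rv K \<phi> kt j" for j
    using rv_lin[of K \<phi> "inverse t4" hs t6i lw z kt j] unfolding cC_def by simp
  have C: "inverse t4 * h - t6i * Ln - z * t5 = 0"
  proof -
    have supp: "\<forall>r. r < l \<or> l + p \<le> r \<longrightarrow> cC r = 0"
    proof (intro allI impI)
      fix r assume r: "r < l \<or> l + p \<le> r"
      show "cC r = 0"
      proof (cases "r = l + p")
        case True
        show ?thesis
        proof (cases "p = 0")
          case True then show ?thesis using hs(2) kt(2) t6i0 \<open>r = l + p\<close> by (simp add: cC_def z_def)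
        next
          case False then show ?thesis using hs(2) kt(2) lw(2) \<open>r = l + p\<close> by (simp add: cC_def z_def)
        qed
      next
        case False
        then have r2: "r < l \<or> l + Suc p \<le> r" using r by auto
        show ?thesis
        proof (cases "r < l")
          case True then show ?thesis using hs(1) kt(1) lw(1) by (simp add: cC_def)
        next
          case False then show ?thesis using r2 hs(1) kt(1) lw(1) by (simp add: cC_def)
        qed
      qed
    qed
    have van: "\<forall>j<p. rv K \<phi> cC (m+1+j) = 0"
    proof (intro allI impI)
      fix j assume j: "j < p"
      have mj: "m + 1 + j = m + Suc j" by simp
      show "rv K \<phi> cC (m+1+j) = 0"
      proof (cases "Suc j < p")
        case True then show ?thesis using hs(3)[rule_format, of "Suc j"] kt(3) lw(3) j rvC by simp
      next
        case False
        then have jp: "Suc j = p" using j by simp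
        have "rv K \<phi> lw (m+1+j) = t6" using lw(4) jp by auto
        moreover have mp: "m + 1 + j = m + p" using jp by simp
        have "rv K \<phi> hs (m+1+j) = t4" using hs(4) by (simp only: mp)
        ultimately show ?thesis using kt(3) j rvC t6nz t6i1 jp t4nz
          by simp
      qed
    qed
    have "\<forall>r. cC r = 0" using uniq[OF supp _ van thinv] K_def by simp
    then have "cC = (\<lambda>r. 0)" by auto
    then have "rv K \<phi> cC (m + 1 + p) = 0" by (simp add: rv_zero)
    then show ?thesis using rvC kt(4) by (simp add: h_def Ln_def)
  qed
  have e1: "t1 = g - x * h" using A by (simp add: algebra_simps)
  have e2: "t2 = g - y * Ln" using B by (simp add: algebra_simps)
  have e3: "z * t5 = inverse t4 * h - t6i * Ln" using C by (simp add: algebra_simps)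
  have "t3 * z * t5 = x * h - y * Ln"
    by (simp add: mult.assoc e3 right_diff_distrib x_def y_def)
  then have fin: "t2 = t1 + t3 * z * t5" using e1 e2 by simp
  show ?thesis using fin unfolding np
    by (simp add: t1_def t2_def t3_def t4_def t5_def z_def t6i_def theta_inv_def)
qed

end
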